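(* Let $\Delta\ge 3$ and let $G$ be a connected finite simple graph with maximum degree $\Delta$ such that $G\in\mathcal{G}_\Delta$ and $G$ is not isomorphic to $K_{\Delta,\Delta}$. Then $\chi'_{ss}(G)\le\Delta^2-1$ and $\chi'_{(0,1)}(G)\le\Delta^2-1$.
   Context: $N(w)$ is the open neighborhood of a vertex $w$. For a positive integer $p$, $\mathcal{G}_p$ is the family of $p$-regular graphs on $2p$ vertices containing an edge $uv$ with $N(u)\cup N(v)=V(G)$. For $M\subseteq E(G)$, $G[V(M)]$ is the subgraph induced by the endvertices of edges of $M$; $M$ is a semistrong matching if every edge of $M$ is incident with a vertex of degree $1$ in $G[V(M)]$; $\chi'_{ss}(G)$ is the least $k$ such that the edges of $G$ can be colored with at most $k$ colors so that each color class is a semistrong matching. Two distinct edges are at distance $1$ if they share an endvertex, and at distance $2$ if they share no endvertex but some edge is adjacent to both. $\chi'_{(0,1)}(G)$ is the least $k$ such that the edges can be colored with at most $k$ colors so that for each edge $e$, no edge at distance $1$ and at most one edge at distance $2$ from $e$ has the color of $e$. $K_{\Delta,\Delta}$ is the complete bipartite graph with both parts of size $\Delta$. *)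

theory Defs
  imports Main
begin

definition simple_graph :: "'a set \<Rightarrow> 'a set set \<Rightarrow> bool" where
  "simple_graph V E \<longleftrightarrow> finite V \<and> (\<forall>e\<in>E. e \<subseteq> V \<and> card e = 2)"

definition nbhd :: "'a set \<Rightarrow> 'a set set \<Rightarrow> 'a \<Rightarrow> 'a set" where
  "nbhd V E w = {u \<in> V. {u, w} \<in> E}"

definition degree :: "'a set \<Rightarrow> 'a set set \<Rightarrow> 'a \<Rightarrow> nat" where
  "degree V E w = card (nbhd V E w)"

definition max_degree :: "'a set \<Rightarrow> 'a set set \<Rightarrow> nat" where
  "max_degree V E = Max (degree V E ` V)"

definition regular :: "'a set \<Rightarrow> 'a set set \<Rightarrow> nat \<Rightarrow> bool" where
  "regular V E p \<longleftrightarrow> (\<forall>v\<in>V. degree V E v = p)"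

definition connected_graph :: "'a set \<Rightarrow> 'a set set \<Rightarrow> bool" where
  "connected_graph V E \<longleftrightarrow>
     (\<forall>u\<in>V. \<forall>v\<in>V. (u, v) \<in> {(x, y). {x, y} \<in> E}\<^sup>*)"

definition in_G_family :: "'a set \<Rightarrow> 'a set set \<Rightarrow> nat \<Rightarrow> bool" where
  "in_G_family V E p \<longleftrightarrow> regular V E p \<and> card V = 2 * p \<and>
     (\<exists>u v. {u, v} \<in> E \<and> nbhd V E u \<union> nbhd V E v = V)"

definition Kbip_V :: "nat \<Rightarrow> (nat \<times> bool) set" where
  "Kbip_V n = {0..<n} \<times> UNIV"

definition Kbip_E :: "nat \<Rightarrow> (nat \<times> bool) set set" where
  "Kbip_E n = {{(i, False), (j, True)} | i j. i < n \<and> j < n}"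

definition graph_iso :: "'a set \<Rightarrow> 'a set set \<Rightarrow> 'b set \<Rightarrow> 'b set set \<Rightarrow> bool" where
  "graph_iso V E V' E' \<longleftrightarrow> (\<exists>f. bij_betw f V V' \<and>
     (\<forall>x\<in>V. \<forall>y\<in>V. {x, y} \<in> E \<longleftrightarrow> {f x, f y} \<in> E'))"

definition is_matching :: "'a set set \<Rightarrow> 'a set set \<Rightarrow> bool" where
  "is_matching E M \<longleftrightarrow> M \<subseteq> E \<and> (\<forall>e\<in>M. \<forall>f\<in>M. e \<noteq> f \<longrightarrow> e \<inter> f = {})"

definition semistrong_matching :: "'a set set \<Rightarrow> 'a set set \<Rightarrow> bool" where
  "semistrong_matching E M \<longleftrightarrow> is_matching E M \<and>
     (\<forall>e\<in>M. \<exists>x\<in>e. card {y \<in> \<Union>M. {x, y} \<in> E} = 1)"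

definition chi_ss :: "'a set \<Rightarrow> 'a set set \<Rightarrow> nat" where
  "chi_ss V E = (LEAST k. \<exists>c :: 'a set \<Rightarrow> nat. c ` E \<subseteq> {..<k} \<and>
      (\<forall>i. semistrong_matching E {e \<in> E. c e = i}))"

definition edge_dist1 :: "'a set \<Rightarrow> 'a set \<Rightarrow> bool" where
  "edge_dist1 e f \<longleftrightarrow> e \<noteq> f \<and> e \<inter> f \<noteq> {}"

definition edge_dist2 :: "'a set set \<Rightarrow> 'a set \<Rightarrow> 'a set \<Rightarrow> bool" where
  "edge_dist2 E e f \<longleftrightarrow> e \<noteq> f \<and> e \<inter> f = {} \<and> (\<exists>g\<in>E. g \<inter> e \<noteq> {} \<and> g \<inter> f \<noteq> {})"

definition chi_01 :: "'a set \<Rightarrow> 'a set set \<Rightarrow> nat" where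
  "chi_01 V E = (LEAST k. \<exists>c :: 'a set \<Rightarrow> nat. c ` E \<subseteq> {..<k} \<and>
      (\<forall>e\<in>E. (\<forall>f\<in>E. edge_dist1 e f \<longrightarrow> c f \<noteq> c e) \<and>
              card {f \<in> E. edge_dist2 E e f \<and> c f = c e} \<le> 1))"

end

theory Submission
  imports Defs
begin

lemma no_loop: "simple_graph V E \<Longrightarrow> {a,a} \<notin> E"
  unfolding simple_graph_def by force

lemma finE: "simple_graph V E \<Longrightarrow> finite E"
  unfolding simple_graph_def
  by (meson Pow_iff finite_Pow_iff rev_finite_subset subsetI)

lemma sing_ss:
  assumes "simple_graph V E" "g \<in> E"
  shows "semistrong_matching E {g}"
proof -
  obtain a b where g: "g = {a,b}" "a \<noteq> b"
    using assms unfolding simple_graph_def by (meson card_2_iff)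
  have "{y \<in> \<Union>{g}. {a, y} \<in> E} = {b}"
    using g assms no_loop[OF assms(1)] by auto
  then show ?thesis using assms g
    unfolding semistrong_matching_def is_matching_def by auto
qed

lemma empty_ss: "semistrong_matching E {}"
  unfolding semistrong_matching_def is_matching_def by auto

lemma card_E:
  assumes "simple_graph V E" "regular V E d" "card V = 2 * d"
  shows "card E = d^2"
proof -
  have fV: "finite V" using assms unfolding simple_graph_def by auto
  have fE: "finite E" using finE[OF assms(1)] .
  have 1: "\<forall>e\<in>E. card {x\<in>V. x \<in> e} = 2"
  proof
    fix e assume "e \<in> E"
    then have "e \<subseteq> V" "card e = 2" using assms unfolding simple_graph_def by auto
    moreover have "{x\<in>V. x \<in> e} = e" using calculation by auto
    ultimately show "card {x\<in>V. x \<in> e} = 2" by simp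
  qed
  have 2: "card {e\<in>E. x \<in> e} = d" if "x \<in> V" for x
  proof -
    have "bij_betw (\<lambda>y. {x,y}) (nbhd V E x) {e\<in>E. x \<in> e}"
    proof (rule bij_betw_imageI)
      show "inj_on (\<lambda>y. {x, y}) (nbhd V E x)"
        by (auto simp: inj_on_def doubleton_eq_iff nbhd_def)
      show "(\<lambda>y. {x, y}) ` nbhd V E x = {e \<in> E. x \<in> e}"
      proof
        show "(\<lambda>y. {x, y}) ` nbhd V E x \<subseteq> {e \<in> E. x \<in> e}"
          by (auto simp: nbhd_def insert_commute)
        show "{e \<in> E. x \<in> e} \<subseteq> (\<lambda>y. {x, y}) ` nbhd V E x"
        proof
          fix e assume e: "e \<in> {e \<in> E. x \<in> e}"
          then have "e \<subseteq> V" "card e = 2" using assms unfolding simple_graph_def by auto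
          then obtain a b where ab: "e = {a,b}" "a \<noteq> b" by (meson card_2_iff)
          show "e \<in> (\<lambda>y. {x, y}) ` nbhd V E x"
          proof (cases "x = a")
            case True
            then show ?thesis using ab e \<open>e \<subseteq> V\<close>
              by (auto simp: nbhd_def insert_commute intro!: image_eqI[where x=b])
          next
            case False
            then have "x = b" using ab e by auto
            then show ?thesis using ab e \<open>e \<subseteq> V\<close>
              by (auto simp: nbhd_def insert_commute intro!: image_eqI[where x=a])
          qed
        qed
      qed
    qed
    then have "card {e\<in>E. x \<in> e} = card (nbhd V E x)" by (simp add: bij_betw_same_card)
    then show ?thesis using assms that unfolding regular_def degree_def by simp
  qed
  have "sum (\<lambda>x. card {e\<in>E. x \<in> e}) V = 2 * card E"
    by (rule sum_multicount[OF fV fE 1])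
  moreover have "sum (\<lambda>x. card {e\<in>E. x \<in> e}) V = card V * d"
    using 2 by simp
  ultimately show ?thesis using assms(3) by (simp add: power2_eq_square)
qed


lemma color_bound:
  assumes sg: "simple_graph V E" and cE: "card E = N + 1"
    and eE: "e \<in> E" and fE: "f \<in> E" and disj: "e \<inter> f = {}"
    and ssp: "semistrong_matching E {e,f}"
  shows "chi_ss V E \<le> N \<and> chi_01 V E \<le> N"
proof -
  have finE': "finite E" using finE[OF sg] .
  have "card e = 2" using eE sg unfolding simple_graph_def by auto
  then have "e \<noteq> {}" by auto
  then have ef: "e \<noteq> f" using disj by auto
  define E' where "E' = E - {f}"
  have cE': "card E' = N" using cE fE finE' unfolding E'_def by simp
  obtain h where h: "bij_betw h E' {0..<card E'}"
    using ex_bij_betw_finite_nat finE' unfolding E'_def by blast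
  define c where "c g = (if g = f then h e else h g)" for g
  have eE': "e \<in> E'" using eE ef unfolding E'_def by auto
  have img: "c ` E \<subseteq> {..<N}"
  proof
    fix x assume "x \<in> c ` E"
    then obtain g where g: "g \<in> E" "x = c g" by auto
    show "x \<in> {..<N}"
    proof (cases "g = f")
      case True then show ?thesis using g h eE' cE' unfolding c_def bij_betw_def by auto
    next
      case False then have "g \<in> E'" using g unfolding E'_def by auto
      then show ?thesis using g h False cE' unfolding c_def bij_betw_def by auto
    qed
  qed
  have inj: "inj_on h E'" using h bij_betw_def by blast
  have key: "{g,g'} = {e,f}" if "g \<in> E" "g' \<in> E" "c g = c g'" "g \<noteq> g'" for g g'
  proof -
    have "g = f \<or> g' = f"
    proof (rule ccontr)
      assume "\<not> (g = f \<or> g' = f)"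
      then have "g \<in> E'" "g' \<in> E'" "h g = h g'" using that unfolding E'_def c_def by auto
      then show False using inj that(4) by (meson inj_onD)
    qed
    then show ?thesis
    proof
      assume gf: "g = f"
      then have "g' \<in> E'" "h e = h g'" using that unfolding E'_def c_def by auto
      then have "g' = e" using inj eE' by (metis inj_onD)
      then show ?thesis using gf by auto
    next
      assume gf: "g' = f"
      then have "g \<in> E'" "h e = h g" using that unfolding E'_def c_def by (auto split: if_splits)
      then have "g = e" using inj eE' by (metis inj_onD)
      then show ?thesis using gf by auto
    qed
  qed
  have ss: "semistrong_matching E {g\<in>E. c g = i}" for i
  proof (cases "\<exists>g\<in>{g\<in>E. c g = i}. \<exists>g'\<in>{g\<in>E. c g = i}. g \<noteq> g'")
    case True
    then obtain g g' where gg: "g \<in> E" "g' \<in> E" "c g = i" "c g' = i" "g \<noteq> g'" by auto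
    then have k: "{g,g'} = {e,f}" using key by auto
    have "{g\<in>E. c g = i} = {e,f}"
    proof
      show "{e,f} \<subseteq> {g\<in>E. c g = i}" using k gg eE fE by (auto simp: doubleton_eq_iff)
      show "{g\<in>E. c g = i} \<subseteq> {e,f}"
      proof
        fix x assume x: "x \<in> {g\<in>E. c g = i}"
        show "x \<in> {e,f}"
        proof (cases "x = g")
          case True then show ?thesis using k by (auto simp: doubleton_eq_iff)
        next
          case False
          then have "{g,x} = {e,f}" using key x gg by auto
          then show ?thesis by (auto simp: doubleton_eq_iff)
        qed
      qed
    qed
    then show ?thesis using ssp by simp
  next
    case False
    then have "{g\<in>E. c g = i} = {} \<or> (\<exists>g\<in>E. {g\<in>E. c g = i} = {g})" by blast
    then show ?thesis
    proof
      assume h0: "{g\<in>E. c g = i} = {}" show ?thesis by (subst h0) (rule empty_ss)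
    next
      assume "\<exists>g\<in>E. {g\<in>E. c g = i} = {g}"
      then obtain g where "g \<in> E" "{g\<in>E. c g = i} = {g}" by blast
      then show ?thesis using sing_ss[OF sg] by metis
    qed
  qed
  have "chi_ss V E \<le> N"
    unfolding chi_ss_def by (rule Least_le) (use img ss in blast)
  moreover have "chi_01 V E \<le> N"
    unfolding chi_01_def
  proof (rule Least_le, rule exI[where x=c], rule conjI[OF img], rule ballI, rule conjI)
    fix e' assume e': "e' \<in> E"
    show "\<forall>g\<in>E. edge_dist1 e' g \<longrightarrow> c g \<noteq> c e'"
    proof (intro ballI impI)
      fix g assume g: "g \<in> E" "edge_dist1 e' g"
      show "c g \<noteq> c e'"
      proof
        assume "c g = c e'"
        moreover have "g \<noteq> e'" using g unfolding edge_dist1_def by auto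
        ultimately have "{g,e'} = {e,f}" using key g e' by blast
        then have "g \<inter> e' = {}" using disj by (auto simp: doubleton_eq_iff)
        then show False using g unfolding edge_dist1_def by auto
      qed
    qed
  next
    fix e' assume e': "e' \<in> E"
    have all: "\<forall>a1\<in>{g \<in> E. edge_dist2 E e' g \<and> c g = c e'}. \<forall>a2\<in>{g \<in> E. edge_dist2 E e' g \<and> c g = c e'}. a1 = a2"
      proof (intro ballI)
        fix a1 a2 assume a1: "a1 \<in> {g \<in> E. edge_dist2 E e' g \<and> c g = c e'}"
          and a2: "a2 \<in> {g \<in> E. edge_dist2 E e' g \<and> c g = c e'}"
        have n: "a1 \<noteq> e'" "a2 \<noteq> e'" using a1 a2 unfolding edge_dist2_def by auto
        have "{a1,e'} = {e,f}" using key a1 e' n by blast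
        moreover have "{a2,e'} = {e,f}" using key a2 e' n by blast
        moreover note n
        ultimately show "a1 = a2" by (auto simp: doubleton_eq_iff)
      qed
    have "card {g \<in> E. edge_dist2 E e' g \<and> c g = c e'} \<le> Suc 0"
      using card_le_Suc0_iff_eq[of "{g \<in> E. edge_dist2 E e' g \<and> c g = c e'}"] all finE' by simp
    then show "card {g \<in> E. edge_dist2 E e' g \<and> c g = c e'} \<le> 1" by simp
  qed
  ultimately show ?thesis by simp
qed


lemma inside_pair:
  assumes sg: "simple_graph V E" and reg: "regular V E d"
    and uvE: "{u,v} \<in> E" and dj: "nbhd V E u \<inter> nbhd V E v = {}"
    and x: "x \<in> nbhd V E v" and y: "y \<in> nbhd V E v" and xy: "{x,y} \<in> E"
    and cB: "card (nbhd V E u) = d"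
  shows "\<exists>e f. e \<in> E \<and> f \<in> E \<and> e \<inter> f = {} \<and> semistrong_matching E {e,f}"
proof -
  have fV: "finite V" and sub: "\<And>e. e \<in> E \<Longrightarrow> e \<subseteq> V"
    using sg unfolding simple_graph_def by auto
  have nl: "\<And>a. {a,a} \<notin> E" using no_loop[OF sg] .
  have uV: "u \<in> V" using sub[OF uvE] by auto
  have xV: "x \<in> V" and yV: "y \<in> V" using x y unfolding nbhd_def by auto
  have xy': "x \<noteq> y" using xy nl by auto
  have xnu: "x \<notin> nbhd V E u" and ynu: "y \<notin> nbhd V E u" using x y dj by auto
  have xu: "x \<noteq> u"
  proof
    assume "x = u"
    then have "y \<in> nbhd V E u" using yV xy unfolding nbhd_def by (auto simp: insert_commute)
    then show False using ynu by simp
  qed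
  have yu: "y \<noteq> u"
  proof
    assume "y = u"
    then have "x \<in> nbhd V E u" using xV xy unfolding nbhd_def by (auto simp: insert_commute)
    then show False using xnu by simp
  qed
  obtain w where w: "w \<in> nbhd V E u" "{x,w} \<notin> E"
  proof (rule ccontr)
    assume "\<not> thesis"
    with that have all: "\<forall>w\<in>nbhd V E u. {x,w} \<in> E" by blast
    have "insert y (nbhd V E u) \<subseteq> nbhd V E x"
      using all xy yV unfolding nbhd_def by (auto simp: insert_commute)
    moreover have "finite (nbhd V E x)" using fV unfolding nbhd_def by auto
    ultimately have "card (insert y (nbhd V E u)) \<le> card (nbhd V E x)" by (simp add: card_mono)
    moreover have "finite (nbhd V E u)" using fV unfolding nbhd_def by auto
    ultimately have "d + 1 \<le> card (nbhd V E x)" using ynu cB by simp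
    moreover have "card (nbhd V E x) = d" using reg xV unfolding regular_def degree_def by auto
    ultimately show False by simp
  qed
  have wV: "w \<in> V" and wuE: "{w,u} \<in> E" using w unfolding nbhd_def by auto
  have eE: "{u,w} \<in> E" using wuE by (simp add: insert_commute)
  have wu: "w \<noteq> u" using wuE nl by auto
  have wx: "w \<noteq> x" "w \<noteq> y" using w xnu ynu by auto
  have ux: "{u,x} \<notin> E" using xnu xV unfolding nbhd_def by (auto simp: insert_commute)
  have uy: "{u,y} \<notin> E" using ynu yV unfolding nbhd_def by (auto simp: insert_commute)
  have disj: "{u,w} \<inter> {x,y} = {}" using xu yu wx by auto
  have neq: "{u,w} \<noteq> {x,y}" using disj by auto
  have c1: "{z \<in> \<Union>{{u,w},{x,y}}. {u,z} \<in> E} = {w}"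
    using nl eE ux uy by auto
  have c2: "{z \<in> \<Union>{{u,w},{x,y}}. {x,z} \<in> E} = {y}"
    using nl xy ux w(2) by (auto simp: insert_commute)
  have "semistrong_matching E {{u,w},{x,y}}"
    unfolding semistrong_matching_def is_matching_def
  proof (intro conjI ballI)
    show "{{u, w}, {x, y}} \<subseteq> E" using eE xy by auto
    show "\<And>e f. e \<in> {{u, w}, {x, y}} \<Longrightarrow> f \<in> {{u, w}, {x, y}} \<Longrightarrow> e \<noteq> f \<longrightarrow> e \<inter> f = {}"
      using disj by auto
    fix e assume "e \<in> {{u, w}, {x, y}}"
    then show "\<exists>z\<in>e. card {t \<in> \<Union> {{u, w}, {x, y}}. {z, t} \<in> E} = 1"
    proof
      assume "e = {u,w}" then show ?thesis using c1 by (intro bexI[where x=u]) auto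
    next
      assume "e \<in> {{x,y}}" then show ?thesis using c2 by (intro bexI[where x=x]) auto
    qed
  qed
  then show ?thesis using eE xy disj by blast
qed


lemma kbip_mem: "{p,q} \<in> Kbip_E n \<longleftrightarrow> snd p \<noteq> snd q \<and> fst p < n \<and> fst q < n"
proof
  assume "{p,q} \<in> Kbip_E n"
  then obtain i j where "{p,q} = {(i,False),(j,True)}" "i < n" "j < n"
    unfolding Kbip_E_def by auto
  then show "snd p \<noteq> snd q \<and> fst p < n \<and> fst q < n" by (auto simp: doubleton_eq_iff)
next
  assume h: "snd p \<noteq> snd q \<and> fst p < n \<and> fst q < n"
  obtain a b c d where pq: "p = (a,b)" "q = (c,d)" by (cases p, cases q) auto
  show "{p,q} \<in> Kbip_E n"
  proof (cases b)
    case True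
    then have "{p,q} = {(c,False),(a,True)}" using h pq by auto
    then show ?thesis using h pq unfolding Kbip_E_def by auto
  next
    case False
    then have "{p,q} = {(a,False),(c,True)}" using h pq by auto
    then show ?thesis using h pq unfolding Kbip_E_def by auto
  qed
qed

lemma complete_side:
  assumes sg: "simple_graph V E" and reg: "regular V E d"
    and cover: "A \<union> B = V" and cB: "card B = d"
    and noA: "\<forall>x\<in>A. \<forall>y\<in>A. {x,y} \<notin> E" and x: "x \<in> A" and y: "y \<in> B"
  shows "{x,y} \<in> E"
proof -
  have fV: "finite V" using sg unfolding simple_graph_def by auto
  have "nbhd V E x \<subseteq> B"
  proof
    fix z assume "z \<in> nbhd V E x"
    then have "z \<in> V" "{z,x} \<in> E" unfolding nbhd_def by auto
    then show "z \<in> B" using noA x cover by auto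
  qed
  moreover have "finite B" using fV cover by auto
  moreover have "card (nbhd V E x) = d" using reg x cover unfolding regular_def degree_def by auto
  ultimately have "nbhd V E x = B" using cB by (simp add: card_subset_eq)
  then show ?thesis using y unfolding nbhd_def by (auto simp: insert_commute)
qed

lemma iso_lemma:
  assumes sg: "simple_graph V E" and reg: "regular V E d"
    and dj: "A \<inter> B = {}" and cover: "A \<union> B = V" and cA: "card A = d" and cB: "card B = d"
    and noA: "\<forall>x\<in>A. \<forall>y\<in>A. {x,y} \<notin> E" and noB: "\<forall>x\<in>B. \<forall>y\<in>B. {x,y} \<notin> E"
  shows "graph_iso V E (Kbip_V d) (Kbip_E d)"
proof -
  have fV: "finite V" using sg unfolding simple_graph_def by auto
  have fA: "finite A" and fB: "finite B" using fV cover by auto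
  obtain gA where gA: "bij_betw gA A {0..<d}" using ex_bij_betw_finite_nat[OF fA] cA by auto
  obtain gB where gB: "bij_betw gB B {0..<d}" using ex_bij_betw_finite_nat[OF fB] cB by auto
  define F where "F z = (if z \<in> A then (gA z, False) else (gB z, True))" for z
  have FA: "\<And>z. z \<in> A \<Longrightarrow> F z = (gA z, False)" unfolding F_def by simp
  have FB: "\<And>z. z \<in> B \<Longrightarrow> F z = (gB z, True)" unfolding F_def using dj by auto
  have iA: "inj_on gA A" and iB: "inj_on gB B" using gA gB unfolding bij_betw_def by auto
  have imA: "gA ` A = {0..<d}" and imB: "gB ` B = {0..<d}" using gA gB unfolding bij_betw_def by auto
  have "bij_betw F V (Kbip_V d)"
    unfolding bij_betw_def
  proof
    show "inj_on F V"
    proof (rule inj_onI)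
      fix a b assume a: "a \<in> V" and b: "b \<in> V" and ab: "F a = F b"
      show "a = b"
      proof (cases "a \<in> A")
        case True
        then have "b \<in> A" using ab b cover FA FB by fastforce
        then show ?thesis using True ab FA iA by (metis inj_onD prod.inject)
      next
        case False
        then have aB: "a \<in> B" using a cover by auto
        then have "b \<in> B" using ab b cover FA FB by fastforce
        then show ?thesis using aB ab FB iB by (metis inj_onD prod.inject)
      qed
    qed
    show "F ` V = Kbip_V d"
    proof
      show "F ` V \<subseteq> Kbip_V d"
      proof
        fix p assume "p \<in> F ` V"
        then obtain z where z: "z \<in> V" "p = F z" by auto
        then show "p \<in> Kbip_V d"
        proof (cases "z \<in> A")
          case True then show ?thesis using z FA imA unfolding Kbip_V_def by auto
        next
          case False then have "z \<in> B" using z cover by auto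
          then show ?thesis using z FB imB unfolding Kbip_V_def by auto
        qed
      qed
      show "Kbip_V d \<subseteq> F ` V"
      proof
        fix p assume p: "p \<in> Kbip_V d"
        obtain i b where ib: "p = (i,b)" by (cases p)
        have i: "i \<in> {0..<d}" using p ib unfolding Kbip_V_def by auto
        show "p \<in> F ` V"
        proof (cases b)
          case True
          obtain z where "z \<in> B" "gB z = i" using i imB by (metis imageE)
          then show ?thesis using ib True FB cover by (intro image_eqI[where x=z]) auto
        next
          case False
          obtain z where "z \<in> A" "gA z = i" using i imA by (metis imageE)
          then show ?thesis using ib False FA cover by (intro image_eqI[where x=z]) auto
        qed
      qed
    qed
  qed
  moreover have "\<forall>x\<in>V. \<forall>y\<in>V. {x, y} \<in> E \<longleftrightarrow> {F x, F y} \<in> Kbip_E d"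
  proof (intro ballI)
    fix x y assume x: "x \<in> V" and y: "y \<in> V"
    have gAd: "\<And>z. z \<in> A \<Longrightarrow> gA z < d" and gBd: "\<And>z. z \<in> B \<Longrightarrow> gB z < d"
      using imA imB by auto
    show "{x, y} \<in> E \<longleftrightarrow> {F x, F y} \<in> Kbip_E d"
    proof (cases "x \<in> A")
      case True
      show ?thesis
      proof (cases "y \<in> A")
        case True2: True
        then show ?thesis using True noA FA by (simp add: kbip_mem)
      next
        case False
        then have yB: "y \<in> B" using y cover by auto
        have "{x,y} \<in> E" using complete_side[OF sg reg cover cB noA True yB] .
        then show ?thesis using True yB FA FB gAd gBd by (simp add: kbip_mem)
      qed
    next
      case False
      then have xB: "x \<in> B" using x cover by auto
      show ?thesis
      proof (cases "y \<in> A")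
        case True
        have cover': "B \<union> A = V" using cover by auto
        have "{x,y} \<in> E" using complete_side[OF sg reg cover' cA noB xB True] .
        then show ?thesis using True xB FA FB gAd gBd by (simp add: kbip_mem)
      next
        case False
        then have yB: "y \<in> B" using y cover by auto
        then show ?thesis using xB noB FB by (simp add: kbip_mem)
      qed
    qed
  qed
  ultimately show ?thesis unfolding graph_iso_def by blast
qed


theorem lemma4:
  fixes V :: "'a set" and E :: "'a set set" and \<Delta> :: nat
  assumes "\<Delta> \<ge> 3"
    and "simple_graph V E"
    and "connected_graph V E"
    and "max_degree V E = \<Delta>"
    and "in_G_family V E \<Delta>"
    and "\<not> graph_iso V E (Kbip_V \<Delta>) (Kbip_E \<Delta>)"
  shows "chi_ss V E \<le> \<Delta>\<^sup>2 - 1 \<and> chi_01 V E \<le> \<Delta>\<^sup>2 - 1"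
proof -
  note sg = assms(2)
  have reg: "regular V E \<Delta>" and cV: "card V = 2 * \<Delta>" using assms(5) unfolding in_G_family_def by auto
  obtain u v where uvE: "{u,v} \<in> E" and cov: "nbhd V E u \<union> nbhd V E v = V"
    using assms(5) unfolding in_G_family_def by auto
  have fV: "finite V" using sg unfolding simple_graph_def by auto
  have uV: "u \<in> V" and vV: "v \<in> V" using uvE sg unfolding simple_graph_def by auto
  have cu: "card (nbhd V E u) = \<Delta>" and cv: "card (nbhd V E v) = \<Delta>"
    using reg uV vV unfolding regular_def degree_def by auto
  have fu: "finite (nbhd V E u)" and fv: "finite (nbhd V E v)" using fV unfolding nbhd_def by auto
  have "card (nbhd V E u) + card (nbhd V E v) = card V + card (nbhd V E u \<inter> nbhd V E v)"
    using card_Un_Int[OF fu fv] cov by simp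
  then have "card (nbhd V E u \<inter> nbhd V E v) = 0" using cu cv cV by simp
  then have dj: "nbhd V E u \<inter> nbhd V E v = {}" using fu by simp
  have cE: "card E = (\<Delta>\<^sup>2 - 1) + 1"
    using card_E[OF sg reg cV] assms(1) by (simp add: power2_eq_square)
  have "\<exists>e f. e \<in> E \<and> f \<in> E \<and> e \<inter> f = {} \<and> semistrong_matching E {e,f}"
  proof (cases "\<exists>x\<in>nbhd V E v. \<exists>y\<in>nbhd V E v. {x,y} \<in> E")
    case True
    then obtain x y where "x \<in> nbhd V E v" "y \<in> nbhd V E v" "{x,y} \<in> E" by blast
    then show ?thesis using inside_pair[OF sg reg uvE dj _ _ _ cu] by blast
  next
    case False
    note F1 = False
    show ?thesis
    proof (cases "\<exists>x\<in>nbhd V E u. \<exists>y\<in>nbhd V E u. {x,y} \<in> E")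
      case True
      then obtain x y where "x \<in> nbhd V E u" "y \<in> nbhd V E u" "{x,y} \<in> E" by blast
      moreover have "{v,u} \<in> E" using uvE by (simp add: insert_commute)
      moreover have "nbhd V E v \<inter> nbhd V E u = {}" using dj by auto
      ultimately show ?thesis using inside_pair[OF sg reg _ _ _ _ _ cv] by blast
    next
      case False
      have "graph_iso V E (Kbip_V \<Delta>) (Kbip_E \<Delta>)"
        by (rule iso_lemma[OF sg reg _ _ cv cu]) (use dj cov F1 False in auto)
      then show ?thesis using assms(6) by blast
    qed
  qed
  then obtain e f where "e \<in> E" "f \<in> E" "e \<inter> f = {}" "semistrong_matching E {e,f}" by blast
  then show ?thesis using color_bound[OF sg cE] by blast
qed

end
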